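(* For every many-to-many matching game with additive externalities $G$, the optimistic, neutral, and pessimistic stable sets satisfy $\mathcal{O}\text{-set}(G)\subseteq\mathcal{N}\text{-set}(G)\subseteq\mathcal{P}\text{-set}(G)$.
   Context: Agents: $N=M\cup W$ with $M,W$ disjoint finite sets. A match is a pair $(m,w)$ with $m\in M$, $w\in W$; a (many-to-many) matching is any set of matches. Forming a match requires consent of both endpoints; severing can be done unilaterally by either endpoint. A game is $G=(M,W,\Pi)$ where $\Pi(m,w\mid z)\in\mathbb{R}$ is the value agent $z$ receives from the formation of match $(m,w)$; utility is $u(z,\mathcal{A})=\sum_{(m,w)\in\mathcal{A}}\Pi(m,w\mid z)$. A coalition $B\subseteq N$ blocks $\mathcal{A}$ if, by rearranging matches among its members and deleting a (possibly empty) subset of its members' matches with agents in $N\setminus B$, with every member of $B$ performing at least one action, it makes at least one member strictly better off and no member worse off, where the deviators' utilities after deviation are evaluated according to an assumed reaction of $N\setminus B$: neutral (no reaction: matches among non-deviators remain, none form); optimistic (each $i\in B$ assumes $N\setminus B$ organize in the best possible way for $i$, cutting matches with negative influence on $i$ and forming all matches with positive influence on $i$, including ones with $i$ as endpoint); pessimistic (each deviator assumes $N\setminus B$ punish it maximally, cutting matches with positive influence on it and forming matches with negative influence on it). $\mathcal{O}\text{-set}(G)$, $\mathcal{N}\text{-set}(G)$, $\mathcal{P}\text{-set}(G)$ denote the sets of matchings admitting no blocking coalition under optimistic, neutral, and pessimistic reasoning respectively. *)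

theory Defs
  imports Complex_Main
begin

(* Agents of type 'a; men M, women W (disjoint, finite).
   Pi m w z : value agent z receives from formation of match (m,w). *)

definition is_game :: "'a set \<Rightarrow> 'a set \<Rightarrow> bool" where
  "is_game M W \<longleftrightarrow> finite M \<and> finite W \<and> M \<inter> W = {}"

definition is_matching :: "'a set \<Rightarrow> 'a set \<Rightarrow> ('a \<times> 'a) set \<Rightarrow> bool" where
  "is_matching M W A \<longleftrightarrow> A \<subseteq> M \<times> W"

definition util :: "('a \<Rightarrow> 'a \<Rightarrow> 'a \<Rightarrow> real) \<Rightarrow> 'a \<Rightarrow> ('a \<times> 'a) set \<Rightarrow> real" where
  "util Pi z A = (\<Sum>(m, w)\<in>A. Pi m w z)"

definition deviation :: "'a set \<Rightarrow> 'a set \<Rightarrow> 'a set \<Rightarrow> ('a \<times> 'a) set \<Rightarrow> ('a \<times> 'a) set \<Rightarrow> bool" where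
  "deviation M W B A A' \<longleftrightarrow>
     A' \<subseteq> M \<times> W \<and>
     (\<forall>m w. m \<notin> B \<and> w \<notin> B \<longrightarrow> ((m, w) \<in> A' \<longleftrightarrow> (m, w) \<in> A)) \<and>
     (\<forall>m w. (m \<in> B) \<noteq> (w \<in> B) \<longrightarrow> (m, w) \<in> A' \<longrightarrow> (m, w) \<in> A) \<and>
     (\<forall>i\<in>B. \<exists>(m, w)\<in>(A - A') \<union> (A' - A). i = m \<or> i = w)"

datatype reasoning = Optimistic | Neutral | Pessimistic

(* Matching that deviator i assumes to result after the reaction of N \ B
   to the post-deviation matching A'. Non-deviators can unilaterally sever any
   match having them as an endpoint, and can form matches among themselves
   (optimistically also matches with i, who consents). *)
fun outcome :: "reasoning \<Rightarrow> 'a set \<Rightarrow> 'a set \<Rightarrow> ('a \<Rightarrow> 'a \<Rightarrow> 'a \<Rightarrow> real)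
     \<Rightarrow> 'a set \<Rightarrow> 'a \<Rightarrow> ('a \<times> 'a) set \<Rightarrow> ('a \<times> 'a) set" where
  "outcome Neutral M W Pi B i A' = A'"
| "outcome Optimistic M W Pi B i A' =
     (A' - {(m, w). (m \<notin> B \<or> w \<notin> B) \<and> Pi m w i < 0})
     \<union> {(m, w)\<in>M \<times> W. ((m \<notin> B \<and> w \<notin> B) \<or> (m = i \<and> w \<notin> B) \<or> (w = i \<and> m \<notin> B))
                        \<and> Pi m w i > 0}"
| "outcome Pessimistic M W Pi B i A' =
     (A' - {(m, w). (m \<notin> B \<or> w \<notin> B) \<and> Pi m w i > 0})
     \<union> {(m, w)\<in>M \<times> W. m \<notin> B \<and> w \<notin> B \<and> Pi m w i < 0}"

definition blocks :: "reasoning \<Rightarrow> 'a set \<Rightarrow> 'a set \<Rightarrow> ('a \<Rightarrow> 'a \<Rightarrow> 'a \<Rightarrow> real)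
     \<Rightarrow> 'a set \<Rightarrow> ('a \<times> 'a) set \<Rightarrow> bool" where
  "blocks r M W Pi B A \<longleftrightarrow> B \<subseteq> M \<union> W \<and>
     (\<exists>A'. deviation M W B A A' \<and>
        (\<forall>i\<in>B. util Pi i (outcome r M W Pi B i A') \<ge> util Pi i A) \<and>
        (\<exists>i\<in>B. util Pi i (outcome r M W Pi B i A') > util Pi i A))"

definition stable_set :: "reasoning \<Rightarrow> 'a set \<Rightarrow> 'a set \<Rightarrow> ('a \<Rightarrow> 'a \<Rightarrow> 'a \<Rightarrow> real)
     \<Rightarrow> ('a \<times> 'a) set set" where
  "stable_set r M W Pi = {A. is_matching M W A \<and> (\<forall>B. \<not> blocks r M W Pi B A)}"

end

theory Submission
  imports Defs
begin

lemma sum_rem_add_le: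
  fixes f :: "'b \<Rightarrow> real"
  assumes "finite S" "finite Y" "\<forall>x\<in>S\<inter>X. 0 \<le> f x" "\<forall>y\<in>Y. f y \<le> 0"
  shows "sum f ((S - X) \<union> Y) \<le> sum f S"
proof -
  have e: "(S - X) \<union> Y = (S - X) \<union> (Y - (S - X))" by blast
  have "sum f ((S - X) \<union> Y) = sum f (S - X) + sum f (Y - (S - X))"
    unfolding e using assms by (intro sum.union_disjoint) auto
  also have "sum f (Y - (S - X)) \<le> 0" using assms by (intro sum_nonpos) auto
  also have "sum f (S \<inter> X) \<ge> 0" using assms by (intro sum_nonneg) auto
  moreover have "sum f S = sum f (S - X) + sum f (S \<inter> X)"
    using assms(1) by (metis Int_commute add.commute sum.Int_Diff)
  ultimately show ?thesis by linarith
qed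

lemma pess_le:
  assumes "is_game M W" "A' \<subseteq> M \<times> W"
  shows "util Pi i (outcome Pessimistic M W Pi B i A') \<le> util Pi i A'"
proof -
  have fin: "finite (M \<times> W)" using assms(1) by (simp add: is_game_def)
  show ?thesis
    unfolding util_def outcome.simps
    apply (rule sum_rem_add_le)
    using fin assms(2) by (auto intro: finite_subset)
qed

lemma opt_ge:
  assumes "is_game M W" "A' \<subseteq> M \<times> W"
  shows "util Pi i A' \<le> util Pi i (outcome Optimistic M W Pi B i A')"
proof -
  have fin: "finite (M \<times> W)" using assms(1) by (simp add: is_game_def)
  let ?f = "\<lambda>(m,w). - Pi m w i"
  have "sum ?f ((A' - {(m, w). (m \<notin> B \<or> w \<notin> B) \<and> Pi m w i < 0})
     \<union> {(m, w)\<in>M \<times> W. ((m \<notin> B \<and> w \<notin> B) \<or> (m = i \<and> w \<notin> B) \<or> (w = i \<and> m \<notin> B))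
                        \<and> Pi m w i > 0}) \<le> sum ?f A'"
    apply (rule sum_rem_add_le)
    using fin assms(2) by (auto intro: finite_subset)
  then show ?thesis
    unfolding util_def outcome.simps
    by (simp add: case_prod_unfold sum_negf)
qed

theorem theorem9:
  fixes M W :: "'a set" and Pi :: "'a \<Rightarrow> 'a \<Rightarrow> 'a \<Rightarrow> real"
  assumes "is_game M W"
  shows "stable_set Optimistic M W Pi \<subseteq> stable_set Neutral M W Pi
       \<and> stable_set Neutral M W Pi \<subseteq> stable_set Pessimistic M W Pi"
proof
  have a: "blocks Optimistic M W Pi B A" if "blocks Neutral M W Pi B A" for B A
  proof -
    from that obtain A' where d: "deviation M W B A A'" and
      h1: "\<forall>i\<in>B. util Pi i A' \<ge> util Pi i A" and h2: "\<exists>i\<in>B. util Pi i A' > util Pi i A"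
      and B: "B \<subseteq> M \<union> W"
      unfolding blocks_def by auto
    have s: "A' \<subseteq> M \<times> W" using d by (simp add: deviation_def)
    show ?thesis unfolding blocks_def using B d h1 h2 opt_ge[OF assms s, of Pi _ B]
      by (meson order_trans less_le_trans)
  qed
  have b: "blocks Neutral M W Pi B A" if "blocks Pessimistic M W Pi B A" for B A
  proof -
    from that obtain A' where d: "deviation M W B A A'" and
      h1: "\<forall>i\<in>B. util Pi i (outcome Pessimistic M W Pi B i A') \<ge> util Pi i A"
      and h2: "\<exists>i\<in>B. util Pi i (outcome Pessimistic M W Pi B i A') > util Pi i A"
      and B: "B \<subseteq> M \<union> W"
      unfolding blocks_def by auto
    have s: "A' \<subseteq> M \<times> W" using d by (simp add: deviation_def)
    have p: "\<And>i. util Pi i (outcome Pessimistic M W Pi B i A') \<le> util Pi i A'"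
      using pess_le[OF assms s] by blast
    have h1': "\<forall>i\<in>B. util Pi i A' \<ge> util Pi i A" using h1 p by (meson order_trans)
    have h2': "\<exists>i\<in>B. util Pi i A' > util Pi i A" using h2 p by (meson less_le_trans)
    show ?thesis unfolding blocks_def using B d h1' h2' by auto
  qed
  show "stable_set Optimistic M W Pi \<subseteq> stable_set Neutral M W Pi"
    unfolding stable_set_def using a by blast
  show "stable_set Neutral M W Pi \<subseteq> stable_set Pessimistic M W Pi"
    unfolding stable_set_def using b by blast
qed

end
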